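(* Let $\xi_1,\xi_2,\dots$ be i.i.d. standard Gaussian random variables. There is a constant $c_1>0$ such that for all $L>0$ and all integers $N\ge1$ with $2L\le N$, $$-\log\mathbb{E}\,e^{-L\max_{i=1,\dots,N}|\xi_i|}\le c_1L\sqrt{\log(N/L)}.$$ Moreover, there is a constant $c_2>0$ such that for all $L\ge1$ and all integers $N\ge1$ with $2L\le N$, $$-\log\mathbb{E}\,e^{-L\max_{i=1,\dots,N}|\xi_i|}\ge c_2L\sqrt{\log(N/L)}.$$ *)

theory Defs
  imports "HOL-Probability.Probability"
begin

definition gauss_max_laplace :: "real \<Rightarrow> nat \<Rightarrow> real" where
  "gauss_max_laplace L N =
     (\<integral>x. exp (- L * Max ((\<lambda>i. \<bar>x i\<bar>) ` {0..<N}))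
        \<partial>(PiM {0..<N} (\<lambda>_. std_normal_distribution)))"

end

theory Submission
  imports Defs
begin

lemma std_prob: "prob_space std_normal_distribution"
  using prob_space_normal_density by simp

lemma pps: "product_prob_space (\<lambda>_::nat. std_normal_distribution)"
  unfolding product_prob_space_def product_prob_space_axioms_def product_sigma_finite_def
  using std_prob prob_space_imp_sigma_finite by auto

lemma std_int_ind:
  fixes A :: "real set" assumes [measurable]: "A \<in> sets borel"
  shows "(\<integral>x. indicator A x \<partial>std_normal_distribution) = (\<integral>x. std_normal_density x * indicator A x \<partial>lborel)"
  by (subst integral_density) auto

lemma prod_int:
  fixes g :: "real \<Rightarrow> real" assumes "integrable std_normal_distribution g"
  shows "(\<integral>x. (\<Prod>i\<in>{0..<N}. g (x i)) \<partial>(PiM {0..<N} (\<lambda>_. std_normal_distribution)))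
     = (\<integral>x. g x \<partial>std_normal_distribution) ^ N"
proof -
  interpret product_prob_space "\<lambda>_::nat. std_normal_distribution" by (rule pps)
  show ?thesis using product_integral_prod[of "{0..<N}" "\<lambda>_. g"] assms by simp
qed

lemma meas_f: fixes N :: nat and L :: real shows "(\<lambda>x. exp (- L * Max ((\<lambda>i. \<bar>x i\<bar>) ` {0..<N}))) \<in> borel_measurable (PiM {0..<N} (\<lambda>_. std_normal_distribution))"
proof -
  have "(\<lambda>x. Max ((\<lambda>i. \<bar>x i\<bar>) ` {0..<N})) \<in> borel_measurable (PiM {0..<N} (\<lambda>_. std_normal_distribution))"
  proof (rule borel_measurable_Max)
    fix i assume "i \<in> {0..<(N::nat)}"
    then show "(\<lambda>x. \<bar>x i\<bar>) \<in> borel_measurable (PiM {0..<N} (\<lambda>_. std_normal_distribution))"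
      by measurable
  qed simp
  then show ?thesis by measurable
qed

lemma std_meas:
  fixes A :: "real set" assumes [measurable]: "A \<in> sets borel"
  shows "measure std_normal_distribution A = (\<integral>x. std_normal_density x * indicator A x \<partial>lborel)"
proof -
  have "measure std_normal_distribution A = (\<integral>x. indicator A x \<partial>std_normal_distribution)"
    by simp
  also have "\<dots> = (\<integral>x. std_normal_density x * indicator A x \<partial>lborel)"
    by (rule std_int_ind) simp
  finally show ?thesis .
qed

lemma int_phi_ind: "integrable lborel (\<lambda>x. std_normal_density x * indicator A x)" if [measurable]: "A \<in> sets borel"
  using integrable_mult_indicator[of A lborel std_normal_density] that by (simp add: mult.commute)

lemma phi_le: "std_normal_density x \<le> 1 / sqrt (2 * pi)"
  unfolding std_normal_density_def by (simp add: divide_right_mono) 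

lemma Q1: assumes "0 \<le> t" shows "measure std_normal_distribution {-t..t} \<le> 2 * t / sqrt (2 * pi)"
proof -
  have "measure std_normal_distribution {-t..t} = (\<integral>x. std_normal_density x * indicator {-t..t} x \<partial>lborel)"
    by (rule std_meas) simp
  also have "\<dots> \<le> (\<integral>x. (1 / sqrt (2 * pi)) * indicator {-t..t} x \<partial>lborel)"
  proof (rule integral_mono)
    show "integrable lborel (\<lambda>x. (1 / sqrt (2 * pi)) * indicator {-t..t} x)"
      using assms by (intro integrable_mult_right integrable_real_indicator) auto
  qed (auto intro!: int_phi_ind simp: phi_le split: split_indicator)
  also have "\<dots> = 2 * t / sqrt (2 * pi)" using assms by simp
  finally show ?thesis .
qed

lemma one_minus_q:
  "1 - measure std_normal_distribution {-t..t} = (\<integral>x. std_normal_density x * (1 - indicator {-t..t} x) \<partial>lborel)"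
proof -
  have "(\<integral>x. std_normal_density x * (1 - indicator {-t..t} x) \<partial>lborel)
     = (\<integral>x. std_normal_density x \<partial>lborel) - (\<integral>x. std_normal_density x * indicator {-t..t} x \<partial>lborel)"
  proof -
    have "(\<integral>x. std_normal_density x * (1 - indicator {-t..t} x) \<partial>lborel)
       = (\<integral>x. std_normal_density x - std_normal_density x * indicator {-t..t} x \<partial>lborel)"
      by (simp add: algebra_simps)
    also have "\<dots> = (\<integral>x. std_normal_density x \<partial>lborel) - (\<integral>x. std_normal_density x * indicator {-t..t} x \<partial>lborel)"
      using Bochner_Integration.integral_diff[OF integrable_normal_density int_phi_ind[of "{-t..t}"]] by simp
    finally show ?thesis .
  qed
  then show ?thesis by (simp add: std_meas)
qed

lemma Q2: assumes "0 \<le> t" shows "std_normal_density (t+1) \<le> 1 - measure std_normal_distribution {-t..t}"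
proof -
  have "std_normal_density (t+1) = (\<integral>x. std_normal_density (t+1) * indicator {t<..t+1} x \<partial>lborel)"
    by simp
  also have "\<dots> \<le> (\<integral>x. std_normal_density x * (1 - indicator {-t..t} x) \<partial>lborel)"
  proof (rule integral_mono)
    show "integrable lborel (\<lambda>x. std_normal_density x * (1 - indicator {-t..t} x))"
      by (auto intro!: int_phi_ind simp: algebra_simps)
    fix x
    show "std_normal_density (t+1) * indicator {t<..t+1} x \<le> std_normal_density x * (1 - indicator {-t..t} x)"
    proof (cases "x \<in> {t<..t+1}")
      case True
      then have "x\<^sup>2 \<le> (t+1)\<^sup>2" using assms by (intro power_mono) auto
      then have "std_normal_density (t+1) \<le> std_normal_density x"
        unfolding std_normal_density_def by (intro mult_left_mono) auto
      then show ?thesis using True by (auto simp: indicator_def)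
    qed (auto simp: indicator_def)
  qed auto
  finally show ?thesis by (simp add: one_minus_q)
qed

lemma Q3: assumes "0 \<le> t" shows "1 - measure std_normal_distribution {-t..t} \<le> 2 * exp (- t\<^sup>2 / 2)"
proof -
  have "(\<integral>x. std_normal_density x * (1 - indicator {-t..t} x) \<partial>lborel)
      \<le> (\<integral>x. exp (- t\<^sup>2 / 2) * (normal_density t 1 x + normal_density (-t) 1 x) \<partial>lborel)"
  proof (rule integral_mono)
    show "integrable lborel (\<lambda>x. std_normal_density x * (1 - indicator {-t..t} x))"
      by (auto intro!: int_phi_ind simp: algebra_simps)
    show "integrable lborel (\<lambda>x. exp (- t\<^sup>2 / 2) * (normal_density t 1 x + normal_density (-t) 1 x))"
      by auto
    fix x
    have nd: "normal_density m 1 x = 1 / sqrt (2 * pi) * exp (- (x - m)\<^sup>2 / 2)" for m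
      unfolding normal_density_def by simp
    show "std_normal_density x * (1 - indicator {-t..t} x) \<le> exp (- t\<^sup>2 / 2) * (normal_density t 1 x + normal_density (-t) 1 x)"
    proof (cases "x \<in> {-t..t}")
      case True
      then show ?thesis by (auto simp: indicator_def intro!: add_nonneg_nonneg)
    next
      case False
      then have "x > t \<or> x < -t" by auto
      then have ineq: "exp (- x\<^sup>2 / 2) \<le> exp (- t\<^sup>2 / 2) * exp (- (x - t)\<^sup>2 / 2) + exp (- t\<^sup>2 / 2) * exp (- (x - (-t))\<^sup>2 / 2)"
      proof
        assume "x > t"
        then have "exp (- x\<^sup>2 / 2) \<le> exp (- t\<^sup>2 / 2) * exp (- (x - t)\<^sup>2 / 2)"
        proof -
          have "- x\<^sup>2 / 2 \<le> - t\<^sup>2 / 2 + - (x - t)\<^sup>2 / 2"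
            using mult_nonneg_nonneg[of t "x - t"] assms \<open>x > t\<close> by (simp add: power2_eq_square algebra_simps)
          then show ?thesis by (simp add: exp_add[symmetric])
        qed
        then show ?thesis by (smt (verit) exp_gt_zero mult_pos_pos)
      next
        assume "x < -t"
        then have "exp (- x\<^sup>2 / 2) \<le> exp (- t\<^sup>2 / 2) * exp (- (x - (-t))\<^sup>2 / 2)"
        proof -
          have "- x\<^sup>2 / 2 \<le> - t\<^sup>2 / 2 + - (x - (-t))\<^sup>2 / 2"
            using mult_nonneg_nonneg[of t "-t - x"] assms \<open>x < -t\<close> by (simp add: power2_eq_square algebra_simps)
          then show ?thesis by (simp add: exp_add[symmetric])
        qed
        then show ?thesis by (smt (verit) exp_gt_zero mult_pos_pos)
      qed
      moreover have "std_normal_density x * (1 - indicator {-t..t} x) = 1 / sqrt (2 * pi) * exp (- x\<^sup>2 / 2)"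
        using False by (simp add: std_normal_density_def)
      moreover have "exp (- t\<^sup>2 / 2) * (normal_density t 1 x + normal_density (-t) 1 x) =
         1 / sqrt (2 * pi) * (exp (- t\<^sup>2 / 2) * exp (- (x - t)\<^sup>2 / 2) + exp (- t\<^sup>2 / 2) * exp (- (x - (-t))\<^sup>2 / 2))"
        by (simp only: nd) (simp add: algebra_simps)
      ultimately show ?thesis using mult_left_mono[OF ineq, of "1 / sqrt (2 * pi)"] by simp
    qed
  qed
  also have "\<dots> = 2 * exp (- t\<^sup>2 / 2)" by simp
  finally show ?thesis by (simp add: one_minus_q)
qed

abbreviation "PP N \<equiv> PiM {0..<N} (\<lambda>_::nat. std_normal_distribution)"

lemma PP_prob: "prob_space (PP N)"
  by (rule prob_space_PiM) (rule std_prob)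

lemma prod_meas: fixes t :: real shows "(\<lambda>x. \<Prod>i\<in>{0..<N}. indicator {-t..t} (x i) :: real) \<in> borel_measurable (PP N)"
  by measurable

lemma int_prod: "integrable (PP N) (\<lambda>x. \<Prod>i\<in>{0..<N}. indicator {-t..t} (x i) :: real)"
proof -
  interpret prob_space "PP N" by (rule PP_prob)
  show ?thesis
    by (rule integrable_const_bound[where B=1]) (auto intro!: prod_le_1 prod_meas simp: abs_prod split: split_indicator)
qed

lemma int_f: "integrable (PP N) (\<lambda>x. exp (- L * Max ((\<lambda>i. \<bar>x i\<bar>) ` {0..<N})))" if "L \<ge> 0" "N \<ge> 1"
proof -
  interpret prob_space "PP N" by (rule PP_prob)
  show ?thesis
  proof (rule integrable_const_bound[where B=1])
    show "AE x in PP N. norm (exp (- L * Max ((\<lambda>i. \<bar>x i\<bar>) ` {0..<N}))) \<le> 1"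
    proof (intro AE_I2)
      fix x :: "nat \<Rightarrow> real"
      have "\<bar>x 0\<bar> \<le> Max ((\<lambda>i. \<bar>x i\<bar>) ` {0..<N})" using that by (intro Max_ge) auto
      then have "0 \<le> L * Max ((\<lambda>i. \<bar>x i\<bar>) ` {0..<N})" using that by (smt (verit) mult_nonneg_nonneg)
      then show "norm (exp (- L * Max ((\<lambda>i. \<bar>x i\<bar>) ` {0..<N}))) \<le> 1" by simp
    qed
  qed (rule meas_f)
qed

lemma prod_prob: "(\<integral>x. (\<Prod>i\<in>{0..<N}. indicator {-t..t} (x i) :: real) \<partial>PP N) = measure std_normal_distribution {-t..t} ^ N"
proof -
  have "(\<integral>x. (\<Prod>i\<in>{0..<N}. indicator {-t..t} (x i) :: real) \<partial>PP N) = (\<integral>x. indicator {-t..t} x \<partial>std_normal_distribution) ^ N"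
    by (rule prod_int, rule integrable_real_indicator) (auto intro: le_less_trans[OF prob_space.emeasure_le_1[OF std_prob]])
  then show ?thesis by simp
qed

lemma Elow: assumes "L \<ge> 0" "N \<ge> 1" "t \<ge> 0"
  shows "exp (- L * t) * measure std_normal_distribution {-t..t} ^ N \<le> gauss_max_laplace L N"
proof -
  have "exp (- L * t) * measure std_normal_distribution {-t..t} ^ N
      = (\<integral>x. exp (- L * t) * (\<Prod>i\<in>{0..<N}. indicator {-t..t} (x i) :: real) \<partial>PP N)"
    by (simp add: prod_prob)
  also have "\<dots> \<le> gauss_max_laplace L N"
    unfolding gauss_max_laplace_def
  proof (rule integral_mono)
    show "integrable (PP N) (\<lambda>x. exp (- L * t) * (\<Prod>i\<in>{0..<N}. indicator {-t..t} (x i) :: real))"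
      by (intro integrable_mult_right int_prod)
    show "integrable (PP N) (\<lambda>x. exp (- L * Max ((\<lambda>i. \<bar>x i\<bar>) ` {0..<N})))"
      using assms by (intro int_f)
    fix x :: "nat \<Rightarrow> real"
    show "exp (- L * t) * (\<Prod>i\<in>{0..<N}. indicator {-t..t} (x i) :: real) \<le> exp (- L * Max ((\<lambda>i. \<bar>x i\<bar>) ` {0..<N}))"
    proof (cases "\<forall>i\<in>{0..<N}. x i \<in> {-t..t}")
      case True
      then have "Max ((\<lambda>i. \<bar>x i\<bar>) ` {0..<N}) \<le> t" using assms by (subst Max_le_iff) auto
      then have "exp (- L * Max ((\<lambda>i. \<bar>x i\<bar>) ` {0..<N})) \<ge> exp (- L * t)"
        using assms by (simp add: mult_left_mono)
      moreover have "(\<Prod>i\<in>{0..<N}. indicator {-t..t} (x i) :: real) = 1" using True by (simp add: indicator_def)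
      ultimately show ?thesis by simp
    next
      case False
      then have "(\<Prod>i\<in>{0..<N}. indicator {-t..t} (x i) :: real) = 0" by (auto simp: indicator_def)
      then show ?thesis by (metis exp_ge_zero mult_zero_right)
    qed
  qed
  finally show ?thesis .
qed

lemma Eup: assumes "L \<ge> 0" "N \<ge> 1"
  shows "gauss_max_laplace L N \<le> measure std_normal_distribution {-t..t} ^ N + exp (- L * t)"
proof -
  interpret prob_space "PP N" by (rule PP_prob)
  have "gauss_max_laplace L N \<le> (\<integral>x. (\<Prod>i\<in>{0..<N}. indicator {-t..t} (x i) :: real) + exp (- L * t) \<partial>PP N)"
    unfolding gauss_max_laplace_def
  proof (rule integral_mono)
    show "integrable (PP N) (\<lambda>x. (\<Prod>i\<in>{0..<N}. indicator {-t..t} (x i) :: real) + exp (- L * t))"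
      by (intro Bochner_Integration.integrable_add int_prod) auto
    show "integrable (PP N) (\<lambda>x. exp (- L * Max ((\<lambda>i. \<bar>x i\<bar>) ` {0..<N})))"
      using assms by (intro int_f)
    fix x :: "nat \<Rightarrow> real"
    show "exp (- L * Max ((\<lambda>i. \<bar>x i\<bar>) ` {0..<N})) \<le> (\<Prod>i\<in>{0..<N}. indicator {-t..t} (x i) :: real) + exp (- L * t)"
    proof (cases "\<forall>i\<in>{0..<N}. x i \<in> {-t..t}")
      case True
      have "\<bar>x 0\<bar> \<le> Max ((\<lambda>i. \<bar>x i\<bar>) ` {0..<N})" using assms by (intro Max_ge) auto
      then have "0 \<le> L * Max ((\<lambda>i. \<bar>x i\<bar>) ` {0..<N})" using assms by (smt (verit) mult_nonneg_nonneg)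
      then have "exp (- L * Max ((\<lambda>i. \<bar>x i\<bar>) ` {0..<N})) \<le> 1" by simp
      moreover have "(\<Prod>i\<in>{0..<N}. indicator {-t..t} (x i) :: real) = 1" using True by (simp add: indicator_def)
      ultimately show ?thesis by (smt (verit) exp_gt_zero)
    next
      case False
      then obtain j where j: "j \<in> {0..<N}" "x j \<notin> {-t..t}" by auto
      then have "t < \<bar>x j\<bar>" by auto
      also have "\<bar>x j\<bar> \<le> Max ((\<lambda>i. \<bar>x i\<bar>) ` {0..<N})" using j by (intro Max_ge) auto
      finally have "exp (- L * Max ((\<lambda>i. \<bar>x i\<bar>) ` {0..<N})) \<le> exp (- L * t)"
        using assms by (simp add: mult_left_mono)
      moreover have "0 \<le> (\<Prod>i\<in>{0..<N}. indicator {-t..t} (x i) :: real)" by (intro prod_nonneg) auto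
      ultimately show ?thesis by linarith
    qed
  qed
  also have "\<dots> = measure std_normal_distribution {-t..t} ^ N + exp (- L * t)"
    by (subst Bochner_Integration.integral_add) (auto intro!: int_prod simp: prod_prob prob_space)
  finally show ?thesis .
qed

lemma ln2_ge: "1/2 \<le> ln (2::real)"
proof -
  have "ln (1/2::real) \<le> 1/2 - 1" by (rule ln_le_minus_one) simp
  then show ?thesis by (simp add: ln_div)
qed

lemma ln2_le: "ln (2::real) \<le> 1"
  using ln_le_minus_one[of 2] by simp

lemma part1_aux:
  assumes L: "L > 0" and N: "N \<ge> 1" and LN: "2 * L \<le> real N"
  shows "gauss_max_laplace L N \<ge> exp (- (L * sqrt (2 * ln (2 * real N / L)) + 2 * L))"
proof -
  define t where "t = sqrt (2 * ln (2 * real N / L))"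
  define x where "x = L / N"
  have Npos: "real N > 0" using N by simp
  have x0: "0 < x" and x1: "x \<le> 1/2" using L Npos LN by (auto simp: x_def field_simps)
  have lnpos: "0 \<le> ln (2 * real N / L)" using L LN by (subst ln_ge_zero_iff) (auto simp: field_simps)
  have t0: "t \<ge> 0" unfolding t_def using lnpos by simp
  have "t\<^sup>2 = 2 * ln (2 * real N / L)" unfolding t_def using lnpos by simp
  then have "exp (- t\<^sup>2 / 2) = L / (2 * N)"
    using L Npos by (simp add: exp_minus exp_ln)
  then have "1 - measure std_normal_distribution {-t..t} \<le> x"
    using Q3[OF t0] by (simp add: x_def)
  then have q1: "1 - x \<le> measure std_normal_distribution {-t..t}" by simp
  have "(1 - x) ^ N = exp (N * ln (1 - x))" using x1 by (simp add: exp_ln_iff exp_of_nat_mult[symmetric] ln_realpow[symmetric])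
  also have "\<dots> \<ge> exp (N * (- x - 2 * x\<^sup>2))"
    using ln_one_minus_pos_lower_bound[of x] x0 x1 by (simp add: mult_left_mono)
  moreover have "N * (- x - 2 * x\<^sup>2) \<ge> - 2 * L"
  proof -
    have "N * x = L" using Npos by (simp add: x_def)
    moreover have "N * (2 * x\<^sup>2) = 2 * L * x" using Npos by (simp add: x_def power2_eq_square)
    moreover have "2 * L * x \<le> L" using x1 L by (simp add: mult_left_mono[of x "1/2" "2*L", simplified])
    ultimately show ?thesis by (simp add: algebra_simps)
  qed
  ultimately have "(1 - x) ^ N \<ge> exp (- 2 * L)" by (smt (verit) exp_le_cancel_iff)
  also have "(1 - x) ^ N \<le> measure std_normal_distribution {-t..t} ^ N"
    using q1 x1 by (intro power_mono) auto
  finally have qN: "exp (- 2 * L) \<le> measure std_normal_distribution {-t..t} ^ N" .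
  have "exp (- (L * t + 2 * L)) = exp (- L * t) * exp (- 2 * L)" by (simp add: exp_add[symmetric])
  also have "\<dots> \<le> exp (- L * t) * measure std_normal_distribution {-t..t} ^ N"
    using qN by simp
  also have "\<dots> \<le> gauss_max_laplace L N" using Elow[of L N t] L N t0 by simp
  finally show ?thesis unfolding t_def .
qed

lemma part1:
  assumes L: "L > 0" and N: "N \<ge> 1" and LN: "2 * L \<le> real N"
  shows "- ln (gauss_max_laplace L N) \<le> 5 * L * sqrt (ln (real N / L))"
proof -
  define s where "s = ln (real N / L)"
  have Npos: "real N > 0" using N by simp
  have s2: "ln 2 \<le> s" unfolding s_def using L LN by (subst ln_le_cancel_iff) (auto simp: field_simps)
  have s0: "1/2 \<le> s" using s2 ln2_ge by simp
  have "ln (2 * real N / L) = ln 2 + s" unfolding s_def using L Npos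
    by (subst times_divide_eq_right[symmetric], subst ln_mult) auto
  then have "2 * ln (2 * real N / L) \<le> (2 * sqrt s)\<^sup>2" using s2 s0 by (simp add: power_mult_distrib)
  then have t: "sqrt (2 * ln (2 * real N / L)) \<le> 2 * sqrt s" using s0 by (intro real_le_lsqrt) auto
  have "2 \<le> 3 * sqrt s"
  proof -
    have "(2::real) = sqrt 4" by simp
    also have "\<dots> \<le> sqrt (9 * s)" using s0 by (subst real_sqrt_le_iff) linarith
    also have "\<dots> = 3 * sqrt s" by (simp add: real_sqrt_mult)
    finally show ?thesis .
  qed
  then have b: "L * 2 \<le> L * (3 * sqrt s)" using L by (intro mult_left_mono) auto
  have a: "L * sqrt (2 * ln (2 * real N / L)) \<le> L * (2 * sqrt s)" using L t by (intro mult_left_mono) auto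
  have "L * sqrt (2 * ln (2 * real N / L)) + 2 * L \<le> 5 * L * sqrt s"
    using a b by (simp add: algebra_simps)
  moreover have E: "exp (- (L * sqrt (2 * ln (2 * real N / L)) + 2 * L)) \<le> gauss_max_laplace L N"
    by (rule part1_aux[OF L N LN])
  then have "- ln (gauss_max_laplace L N) \<le> L * sqrt (2 * ln (2 * real N / L)) + 2 * L"
    using ln_le_cancel_iff[of "exp (- (L * sqrt (2 * ln (2 * real N / L)) + 2 * L))" "gauss_max_laplace L N"]
    by (smt (verit) exp_gt_zero ln_exp)
  ultimately show ?thesis unfolding s_def by simp
qed

lemma E_pos: assumes L: "L > 0" and N: "N \<ge> 1" and LN: "2 * L \<le> real N"
  shows "gauss_max_laplace L N > 0"
  using part1_aux[OF assms] by (smt (verit) exp_gt_zero)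

lemma part2_big:
  assumes L: "L \<ge> 1" and N: "N \<ge> 1" and LN: "2 * L \<le> real N"
  defines "A \<equiv> L * sqrt (ln (real N / L)) / 9"
  shows "gauss_max_laplace L N \<le> 2 * exp (- A)"
proof -
  define s where "s = ln (real N / L)"
  define t where "t = sqrt (s / 2)"
  have Npos: "real N > 0" using N by simp
  have s0: "0 \<le> s" unfolding s_def using L LN by (subst ln_ge_zero_iff) (auto simp: field_simps)
  have t0: "0 \<le> t" unfolding t_def using s0 by simp
  have tt: "t\<^sup>2 = s / 2" unfolding t_def using s0 by simp
  have NL: "real N = L * exp s" unfolding s_def using L Npos by simp
  define p where "p = exp (- s / 2) / 9"
  have "(t + 1)\<^sup>2 \<le> s + 2"
  proof -
    have "(t + 1)\<^sup>2 \<le> 2 * t\<^sup>2 + 2" using sum_squares_ge_zero[of "t - 1" 0] by (simp add: power2_eq_square algebra_simps)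
    then show ?thesis using tt by simp
  qed
  then have e1: "exp (- s / 2 - 1) \<le> exp (- (t + 1)\<^sup>2 / 2)" by simp
  have sq: "sqrt (2 * pi) \<le> 3"
    using pi_less_4 by (intro real_le_lsqrt) (auto simp: power2_eq_square)
  have "exp (1::real) \<le> 3" by (rule exp_le)
  then have "exp (- s / 2) / 3 \<le> exp (- s / 2) / exp 1"
    by (intro divide_left_mono) auto
  then have "exp (- s / 2) / 9 \<le> exp (- s / 2 - 1) / 3"
    by (simp add: exp_diff mult.commute)
  also have "\<dots> \<le> exp (- (t + 1)\<^sup>2 / 2) / 3" using e1 by simp
  also have "\<dots> \<le> exp (- (t + 1)\<^sup>2 / 2) / sqrt (2 * pi)"
    using sq by (intro divide_left_mono) auto
  also have "\<dots> = std_normal_density (t + 1)" by (simp add: std_normal_density_def)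
  also have "\<dots> \<le> 1 - measure std_normal_distribution {-t..t}" by (rule Q2[OF t0])
  finally have pq: "measure std_normal_distribution {-t..t} \<le> 1 - p" unfolding p_def by simp
  have "measure std_normal_distribution {-t..t} ^ N \<le> (1 - p) ^ N"
    using pq by (intro power_mono) auto
  also have "\<dots> \<le> exp (- p) ^ N"
  proof (rule power_mono)
    show "1 - p \<le> exp (- p)" using exp_ge_add_one_self[of "- p"] by simp
    have "p \<le> 1" using pq measure_nonneg[of std_normal_distribution "{-t..t}"] by linarith
    then show "0 \<le> 1 - p" by simp
  qed
  also have "\<dots> = exp (- (N * p))" by (simp add: exp_of_nat_mult[symmetric])
  also have "\<dots> \<le> exp (- A)"
  proof -
    have "N * p = L * exp (s / 2) / 9"
      unfolding NL p_def by (simp add: exp_diff[symmetric] exp_add[symmetric] field_simps)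
    moreover have "sqrt s \<le> exp (s / 2)"
    proof -
      have "sqrt s \<le> 1 + s / 2"
        using s0 sum_squares_ge_zero[of "s/2" 0] by (intro real_le_lsqrt) (auto simp: power2_eq_square algebra_simps)
      also have "\<dots> \<le> exp (s / 2)" by (rule exp_ge_add_one_self)
      finally show ?thesis .
    qed
    ultimately have "A \<le> N * p" unfolding A_def s_def using L by (simp add: divide_right_mono mult_left_mono)
    then show ?thesis by simp
  qed
  finally have qA: "measure std_normal_distribution {-t..t} ^ N \<le> exp (- A)" .
  have "A \<le> L * t"
  proof -
    have "sqrt s / 9 \<le> sqrt (s / 2)"
    proof -
      have "sqrt s / 9 = sqrt (s / 81)" by (simp add: real_sqrt_divide)
      also have "\<dots> \<le> sqrt (s / 2)" using s0 by simp
      finally show ?thesis .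
    qed
    then have "L * (sqrt s / 9) \<le> L * t" unfolding t_def using L by (intro mult_left_mono) auto
    then show ?thesis unfolding A_def s_def by simp
  qed
  then have m: "exp (- L * t) \<le> exp (- A)" by simp
  have e: "gauss_max_laplace L N \<le> measure std_normal_distribution {-t..t} ^ N + exp (- L * t)"
    by (rule Eup) (use L N in auto)
  show ?thesis using m e qA by linarith
qed

lemma part2_small:
  assumes L: "L \<ge> 1" and N: "N \<ge> 1" and LN: "2 * L \<le> real N"
  shows "gauss_max_laplace L N \<le> 11 / 12"
proof -
  have N2: "N \<ge> 2" using L LN by simp
  have "measure std_normal_distribution {-(1/2)..1/2} \<le> 2 * (1/2) / sqrt (2 * pi)"
    by (rule Q1) simp
  also have "\<dots> \<le> 1 / 2"
  proof -
    have "2 \<le> sqrt (2 * pi)" using pi_ge_two by (intro real_le_rsqrt) (auto simp: power2_eq_square)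
    then show ?thesis by (simp add: field_simps)
  qed
  finally have q: "measure std_normal_distribution {-(1/2)..1/2} \<le> 1/2" .
  have "measure std_normal_distribution {-(1/2)..1/2} ^ N \<le> measure std_normal_distribution {-(1/2)..1/2} ^ 2"
    using q N2 by (intro power_decreasing) auto
  also have "\<dots> \<le> (1/2) ^ 2" using q by (intro power_mono) auto
  finally have qN: "measure std_normal_distribution {-(1/2)..1/2} ^ N \<le> 1/4" by (simp add: power2_eq_square)
  have "3 / 2 \<le> exp (1/2::real)" using exp_ge_add_one_self[of "1/2::real"] by simp
  then have m1: "exp (- (1/2::real)) \<le> 2 / 3" by (simp add: exp_minus field_simps)
  have m2: "exp (- L * (1/2)) \<le> exp (- (1/2))" using L by simp
  have e: "gauss_max_laplace L N \<le> measure std_normal_distribution {-(1/2)..1/2} ^ N + exp (- L * (1/2))"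
    by (rule Eup) (use L N in auto)
  show ?thesis using m1 m2 e qN by linarith
qed

lemma part2:
  assumes L: "L \<ge> 1" and N: "N \<ge> 1" and LN: "2 * L \<le> real N"
  shows "- ln (gauss_max_laplace L N) \<ge> 1 / 216 * L * sqrt (ln (real N / L))"
proof -
  define A where "A = L * sqrt (ln (real N / L)) / 9"
  have E0: "gauss_max_laplace L N > 0" using E_pos[of L N] assms by simp
  have A0: "A \<ge> 0" unfolding A_def using L LN by (auto simp: field_simps)
  show ?thesis
  proof (cases "A \<ge> 2")
    case True
    have "ln (gauss_max_laplace L N) \<le> ln (2 * exp (- A))"
      using part2_big[OF assms] E0 by (subst ln_le_cancel_iff) (auto simp: A_def)
    also have "\<dots> = ln 2 - A" by (simp add: ln_mult)
    finally have "- ln (gauss_max_laplace L N) \<ge> A - 1" using ln2_le by simp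
    then show ?thesis using True unfolding A_def by simp
  next
    case False
    have "ln (gauss_max_laplace L N) \<le> gauss_max_laplace L N - 1" by (rule ln_le_minus_one[OF E0])
    then have "- ln (gauss_max_laplace L N) \<ge> 1 / 12" using part2_small[OF assms] by simp
    then show ?thesis using False unfolding A_def by simp
  qed
qed


theorem lemma6:
  shows "(\<exists>c1>0. \<forall>L::real. \<forall>N::nat. L > 0 \<and> N \<ge> 1 \<and> 2 * L \<le> real N \<longrightarrow>
            - ln (gauss_max_laplace L N) \<le> c1 * L * sqrt (ln (real N / L)))
       \<and> (\<exists>c2>0. \<forall>L::real. \<forall>N::nat. L \<ge> 1 \<and> N \<ge> 1 \<and> 2 * L \<le> real N \<longrightarrow>
            - ln (gauss_max_laplace L N) \<ge> c2 * L * sqrt (ln (real N / L)))"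
proof
  show "\<exists>c1>0. \<forall>L::real. \<forall>N::nat. L > 0 \<and> N \<ge> 1 \<and> 2 * L \<le> real N \<longrightarrow>
            - ln (gauss_max_laplace L N) \<le> c1 * L * sqrt (ln (real N / L))"
    by (rule exI[of _ 5]) (auto intro: part1)
  show "\<exists>c2>0. \<forall>L::real. \<forall>N::nat. L \<ge> 1 \<and> N \<ge> 1 \<and> 2 * L \<le> real N \<longrightarrow>
            - ln (gauss_max_laplace L N) \<ge> c2 * L * sqrt (ln (real N / L))"
  proof (rule exI[of _ "1/216"], intro conjI allI impI)
    fix L :: real and N :: nat
    assume "L \<ge> 1 \<and> N \<ge> 1 \<and> 2 * L \<le> real N"
    then show "- ln (gauss_max_laplace L N) \<ge> 1/216 * L * sqrt (ln (real N / L))"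
      using part2[of L N] by blast
  qed simp
qed

end
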